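(* There is a finite set $D$ and an infinite set $\Gamma \subseteq \mathbf{\Phi}_D$ of weighted relations such that $\mathrm{Imp}(\mathrm{wPol}(\Gamma)) \neq \mathrm{wRelClone}(\Gamma)$.
   Context: Let $\overline{\mathbb{Q}}=\mathbb{Q}\cup\{\infty\}$. An $m$-ary weighted relation on a finite set $D$ ($m\ge1$) is a map $\gamma:D^m\to\overline{\mathbb{Q}}$; $\mathbf{\Phi}_D$ denotes the set of all weighted relations on $D$. $\mathrm{Feas}(\gamma)=\{\mathbf{x}\in D^m:\gamma(\mathbf{x})<\infty\}$. $\phi_=$ is the binary equality relation ($0$ if $x=y$, $\infty$ otherwise) and $\phi_\emptyset$ is the unary relation that is $\infty$ everywhere. A weighted relation $\gamma$ of arity $r$ is obtained by addition from $\gamma_1$ (arity $s$) and $\gamma_2$ (arity $t$) if $\gamma(x_1,\dots,x_r)=\gamma_1(y_1,\dots,y_s)+\gamma_2(z_1,\dots,z_t)$ for some fixed choice of the $y_i,z_j$ among $x_1,\dots,x_r$; it is obtained by minimisation from $\gamma'$ of arity $r+s$ if $\gamma(x_1,\dots,x_r)=\min_{(y_1,\dots,y_s)\in D^s}\gamma'(x_1,\dots,x_r,y_1,\dots,y_s)$. A set $\Gamma\subseteq\mathbf{\Phi}_D$ is a weighted relational clone if it contains $\phi_=$ and $\phi_\emptyset$ and is closed under addition, minimisation, scaling by non-negative rational constants (with $0\cdot\infty=\infty$) and addition of rational constants; $\mathrm{wRelClone}(\Gamma)$ is the smallest weighted relational clone containing $\Gamma$. A $k$-ary operation is a map $f:D^k\to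 D$, applied to tuples coordinatewise. $f$ is a polymorphism of $\gamma$ if $f(\mathbf{x}_1,\dots,\mathbf{x}_k)\in\mathrm{Feas}(\gamma)$ whenever all $\mathbf{x}_i\in\mathrm{Feas}(\gamma)$; $\mathrm{Pol}(\Gamma)$ is the set of common polymorphisms of all $\gamma\in\Gamma$. Projections are $e^{(k)}_i(x_1,\dots,x_k)=x_i$. A clone is a set of operations containing all projections and closed under superposition ($f[g_1,\dots,g_k](\mathbf{x})=f(g_1(\mathbf{x}),\dots,g_k(\mathbf{x}))$); $C^{(k)}$ denotes its $k$-ary members. A $k$-ary weighting of a clone $C$ is a function $\omega:C^{(k)}\to\mathbb{Q}$ with $\sum_{f\in C^{(k)}}\omega(f)=0$ and $\omega(f)<0$ only if $f$ is a projection. It is a weighted polymorphism of $\gamma$ ($\gamma$ is improved by $\omega$) if $C\subseteq\mathrm{Pol}(\gamma)$ and for all $\mathbf{x}_1,\dots,\mathbf{x}_k\in\mathrm{Feas}(\gamma)$, $\sum_{f\in C^{(k)}}\omega(f)\gamma(f(\mathbf{x}_1,\dots,\mathbf{x}_k))\le0$. $\mathrm{wPol}(\Gamma)$ is the set of all weightings of the clone $\mathrm{Pol}(\Gamma)$ that are weighted polymorphisms of every $\gamma\in\Gamma$; $\mathrm{Imp}(\Omega)$ is the set of weighted relations in $\mathbf{\Phi}_D$ improved by every $\omega\in\Omega$. *)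

theory Defs
  imports Complex_Main
begin

datatype qbar = Fin rat | PInf

fun qadd :: "qbar \<Rightarrow> qbar \<Rightarrow> qbar" where
  "qadd (Fin a) (Fin b) = Fin (a + b)"
| "qadd _ _ = PInf"

text \<open>Scaling by a non-negative rational, with the convention 0 * infinity = infinity.\<close>
fun qscale :: "rat \<Rightarrow> qbar \<Rightarrow> qbar" where
  "qscale c (Fin a) = Fin (c * a)"
| "qscale c PInf = PInf"

fun fval :: "qbar \<Rightarrow> rat" where
  "fval (Fin a) = a"
| "fval PInf = 0"

definition qMin :: "qbar set \<Rightarrow> qbar" where
  "qMin S = (if (\<exists>a. Fin a \<in> S) then Fin (Min {a. Fin a \<in> S}) else PInf)"

definition tuples :: "nat set \<Rightarrow> nat \<Rightarrow> nat list set" where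
  "tuples D m = {x. length x = m \<and> set x \<subseteq> D}"

text \<open>A weighted relation is a pair (arity m, function); the function is normalised to be
  infinity outside D^m, so that it is determined by its values on D^m.\<close>
type_synonym wrel = "nat \<times> (nat list \<Rightarrow> qbar)"

definition wrels :: "nat set \<Rightarrow> wrel set" where
  "wrels D = {(m, g). m \<ge> 1 \<and> (\<forall>x. x \<notin> tuples D m \<longrightarrow> g x = PInf)}"

definition feas :: "nat set \<Rightarrow> wrel \<Rightarrow> nat list set" where
  "feas D \<gamma> = {x \<in> tuples D (fst \<gamma>). snd \<gamma> x \<noteq> PInf}"

definition phi_eq :: "nat set \<Rightarrow> wrel" where
  "phi_eq D = (2, \<lambda>x. if x \<in> tuples D 2 \<and> x ! 0 = x ! 1 then Fin 0 else PInf)"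

definition phi_empty :: wrel where
  "phi_empty = (1, \<lambda>x. PInf)"

definition wadd :: "nat set \<Rightarrow> nat \<Rightarrow> (nat list \<Rightarrow> qbar) \<Rightarrow> nat list
    \<Rightarrow> (nat list \<Rightarrow> qbar) \<Rightarrow> nat list \<Rightarrow> wrel" where
  "wadd D r g1 ys g2 zs = (r, \<lambda>x. if x \<in> tuples D r
       then qadd (g1 (map (\<lambda>i. x ! i) ys)) (g2 (map (\<lambda>i. x ! i) zs)) else PInf)"

definition wmin :: "nat set \<Rightarrow> nat \<Rightarrow> nat \<Rightarrow> (nat list \<Rightarrow> qbar) \<Rightarrow> wrel" where
  "wmin D r s g = (r, \<lambda>x. if x \<in> tuples D r
       then qMin {g (x @ y) | y. y \<in> tuples D s} else PInf)"

definition wrel_clone :: "nat set \<Rightarrow> wrel set \<Rightarrow> bool" where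
  "wrel_clone D C \<longleftrightarrow> C \<subseteq> wrels D \<and> phi_eq D \<in> C \<and> phi_empty \<in> C
   \<and> (\<forall>s g1 t g2 r ys zs. (s, g1) \<in> C \<and> (t, g2) \<in> C \<and> r \<ge> 1
        \<and> length ys = s \<and> length zs = t \<and> set ys \<subseteq> {..<r} \<and> set zs \<subseteq> {..<r}
        \<longrightarrow> wadd D r g1 ys g2 zs \<in> C)
   \<and> (\<forall>r s g. (r + s, g) \<in> C \<and> r \<ge> 1 \<longrightarrow> wmin D r s g \<in> C)
   \<and> (\<forall>m g c. (m, g) \<in> C \<and> c \<ge> 0 \<longrightarrow> (m, \<lambda>x. qscale c (g x)) \<in> C)
   \<and> (\<forall>m g c. (m, g) \<in> C \<longrightarrow> (m, \<lambda>x. qadd (g x) (Fin c)) \<in> C)"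

definition wRelClone :: "nat set \<Rightarrow> wrel set \<Rightarrow> wrel set" where
  "wRelClone D \<Gamma> = \<Inter> {C. wrel_clone D C \<and> \<Gamma> \<subseteq> C}"

text \<open>Operations: (arity k >= 1, function D^k -> D), normalised to 0 outside D^k.\<close>
type_synonym op = "nat \<times> (nat list \<Rightarrow> nat)"

definition ops :: "nat set \<Rightarrow> op set" where
  "ops D = {(k, f). k \<ge> 1 \<and> (\<forall>x \<in> tuples D k. f x \<in> D) \<and> (\<forall>x. x \<notin> tuples D k \<longrightarrow> f x = 0)}"

definition app :: "(nat list \<Rightarrow> nat) \<Rightarrow> nat list list \<Rightarrow> nat \<Rightarrow> nat list" where
  "app f xs m = map (\<lambda>j. f (map (\<lambda>x. x ! j) xs)) [0..<m]"

definition proj :: "nat set \<Rightarrow> nat \<Rightarrow> nat \<Rightarrow> op" where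
  "proj D k i = (k, \<lambda>x. if x \<in> tuples D k then x ! i else 0)"

definition superpos :: "nat set \<Rightarrow> nat \<Rightarrow> (nat list \<Rightarrow> nat) \<Rightarrow> (nat list \<Rightarrow> nat) list \<Rightarrow> op" where
  "superpos D n f gs = (n, \<lambda>x. if x \<in> tuples D n then f (map (\<lambda>g. g x) gs) else 0)"

definition is_clone :: "nat set \<Rightarrow> op set \<Rightarrow> bool" where
  "is_clone D C \<longleftrightarrow> C \<subseteq> ops D
   \<and> (\<forall>k i. k \<ge> 1 \<and> i < k \<longrightarrow> proj D k i \<in> C)
   \<and> (\<forall>k f n gs. (k, f) \<in> C \<and> length gs = k \<and> (\<forall>g \<in> set gs. (n, g) \<in> C)
        \<longrightarrow> superpos D n f gs \<in> C)"

definition kary :: "op set \<Rightarrow> nat \<Rightarrow> (nat list \<Rightarrow> nat) set" where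
  "kary C k = {f. (k, f) \<in> C}"

definition Pol :: "nat set \<Rightarrow> wrel set \<Rightarrow> op set" where
  "Pol D \<Gamma> = {(k, f) \<in> ops D. \<forall>\<gamma> \<in> \<Gamma>. \<forall>xs. length xs = k \<and> set xs \<subseteq> feas D \<gamma>
        \<longrightarrow> app f xs (fst \<gamma>) \<in> feas D \<gamma>}"

definition weighting :: "nat set \<Rightarrow> op set \<Rightarrow> nat \<Rightarrow> ((nat list \<Rightarrow> nat) \<Rightarrow> rat) \<Rightarrow> bool" where
  "weighting D C k \<omega> \<longleftrightarrow> is_clone D C \<and> k \<ge> 1
   \<and> (\<forall>f. f \<notin> kary C k \<longrightarrow> \<omega> f = 0)
   \<and> (\<Sum>f \<in> kary C k. \<omega> f) = 0
   \<and> (\<forall>f \<in> kary C k. \<omega> f < 0 \<longrightarrow> (\<exists>i<k. (k, f) = proj D k i))"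

text \<open>A weighting together with the clone it is a weighting of, and its arity.\<close>
type_synonym wt = "op set \<times> nat \<times> ((nat list \<Rightarrow> nat) \<Rightarrow> rat)"

definition improves :: "nat set \<Rightarrow> wt \<Rightarrow> wrel \<Rightarrow> bool" where
  "improves D w \<gamma> \<longleftrightarrow> (case w of (C, k, \<omega>) \<Rightarrow>
     C \<subseteq> Pol D {\<gamma>}
     \<and> (\<forall>xs. length xs = k \<and> set xs \<subseteq> feas D \<gamma> \<longrightarrow>
          (\<Sum>f \<in> kary C k. \<omega> f * fval (snd \<gamma> (app f xs (fst \<gamma>)))) \<le> 0))"

definition wPol :: "nat set \<Rightarrow> wrel set \<Rightarrow> wt set" where
  "wPol D \<Gamma> = {(C, k, \<omega>). C = Pol D \<Gamma> \<and> weighting D C k \<omega> \<and> (\<forall>\<gamma> \<in> \<Gamma>. improves D (C, k, \<omega>) \<gamma>)}"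

definition Imp :: "nat set \<Rightarrow> wt set \<Rightarrow> wrel set" where
  "Imp D \<Omega> = {\<gamma> \<in> wrels D. \<forall>w \<in> \<Omega>. improves D w \<gamma>}"

end

theory Submission
  imports Defs
begin

definition D3 :: "nat set" where "D3 = {0,1,2}"
definition fa :: "nat \<Rightarrow> nat" where "fa a = (if a = 2 then 1 else a)"
definition fb :: "nat \<Rightarrow> nat" where "fb a = (if a = 2 then 0 else a)"

definition winv :: "rat \<Rightarrow> nat \<Rightarrow> (nat list \<Rightarrow> qbar) \<Rightarrow> bool" where
  "winv e m g \<longleftrightarrow> (\<forall>x \<in> tuples D3 m. g x \<noteq> PInf \<longrightarrow>
      g (map fa x) \<noteq> PInf \<and> g (map fb x) \<noteq> PInf
      \<and> fval (g (map fb x)) \<le> fval (g x)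
      \<and> e * fval (g (map fa x)) + (1 - e) * fval (g (map fb x)) \<le> fval (g x))"

definition CC :: "wrel set" where
  "CC = {(m, g) \<in> wrels D3. \<exists>e. 0 < e \<and> e \<le> 1 \<and> winv e m g}"

lemma fa_D3: "a \<in> D3 \<Longrightarrow> fa a \<in> D3" by (auto simp: D3_def fa_def)
lemma fb_D3: "a \<in> D3 \<Longrightarrow> fb a \<in> D3" by (auto simp: D3_def fb_def)

lemma map_fa_tuples: "x \<in> tuples D3 m \<Longrightarrow> map fa x \<in> tuples D3 m"
  using fa_D3 by (auto simp: tuples_def)
lemma map_fb_tuples: "x \<in> tuples D3 m \<Longrightarrow> map fb x \<in> tuples D3 m"
  using fb_D3 by (auto simp: tuples_def)

lemma finite_tuples: "finite D \<Longrightarrow> finite (tuples D m)"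
  unfolding tuples_def using finite_lists_length_eq[of D m] by (simp add: conj_commute)

lemma winv_mono:
  assumes "winv e m g" "0 < d" "d \<le> e" "e \<le> 1"
  shows "winv d m g"
  unfolding winv_def
proof (intro ballI impI)
  fix x assume x: "x \<in> tuples D3 m" "g x \<noteq> PInf"
  have h: "g (map fa x) \<noteq> PInf \<and> g (map fb x) \<noteq> PInf
      \<and> fval (g (map fb x)) \<le> fval (g x)
      \<and> e * fval (g (map fa x)) + (1 - e) * fval (g (map fb x)) \<le> fval (g x)"
    using assms(1) x unfolding winv_def by blast
  define A where "A = fval (g (map fa x))"
  define B where "B = fval (g (map fb x))"
  define V where "V = fval (g x)"
  have BV: "B \<le> V" and E: "e * A + (1 - e) * B \<le> V" using h by (auto simp: A_def B_def V_def)
  have "d * A + (1 - d) * B = (d/e) * (e * A + (1 - e) * B) + (1 - d/e) * B"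
    using assms by (simp add: field_simps)
  also have "\<dots> \<le> (d/e) * V + (1 - d/e) * V"
  proof (rule add_mono)
    have "0 \<le> d/e" using assms by simp
    then show "(d/e) * (e * A + (1 - e) * B) \<le> (d/e) * V" using E by (rule mult_left_mono[rotated])
    have "d/e \<le> 1" using assms by simp
    then have "0 \<le> 1 - d/e" by simp
    then show "(1 - d/e) * B \<le> (1 - d/e) * V" using BV by (rule mult_left_mono[rotated])
  qed
  also have "\<dots> = V" by (simp add: algebra_simps)
  finally show "g (map fa x) \<noteq> PInf \<and> g (map fb x) \<noteq> PInf
      \<and> fval (g (map fb x)) \<le> fval (g x)
      \<and> d * fval (g (map fa x)) + (1 - d) * fval (g (map fb x)) \<le> fval (g x)"
    using h by (simp add: A_def B_def V_def)
qed

lemma qadd_fin: "qadd a b \<noteq> PInf \<longleftrightarrow> a \<noteq> PInf \<and> b \<noteq> PInf"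
  by (cases a; cases b) auto
lemma qadd_fval: "a \<noteq> PInf \<Longrightarrow> b \<noteq> PInf \<Longrightarrow> fval (qadd a b) = fval a + fval b"
  by (cases a; cases b) auto
lemma qscale_fin: "qscale c a \<noteq> PInf \<longleftrightarrow> a \<noteq> PInf"
  by (cases a) auto
lemma qscale_fval: "fval (qscale c a) = c * fval a"
  by (cases a) auto

lemma qMin_in:
  assumes "finite S" "qMin S \<noteq> PInf"
  shows "qMin S \<in> S"
proof -
  have ex: "\<exists>a. Fin a \<in> S" using assms(2) by (auto simp: qMin_def split: if_splits)
  have fin: "finite {a. Fin a \<in> S}"
    by (rule finite_subset[of _ "fval ` S"]) (force, use assms(1) in simp)
  have "Min {a. Fin a \<in> S} \<in> {a. Fin a \<in> S}" using ex fin by (intro Min_in) auto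
  then show ?thesis using ex by (simp add: qMin_def)
qed

lemma qMin_le:
  assumes "finite S" "z \<in> S" "z \<noteq> PInf"
  shows "qMin S \<noteq> PInf \<and> fval (qMin S) \<le> fval z"
proof -
  obtain a where a: "z = Fin a" using assms(3) by (cases z) auto
  have fin: "finite {a. Fin a \<in> S}"
    by (rule finite_subset[of _ "fval ` S"]) (force, use assms(1) in simp)
  have "Min {a. Fin a \<in> S} \<le> a" using fin a assms(2) by (intro Min_le) auto
  then show ?thesis using a assms(2) by (auto simp: qMin_def)
qed



lemma sel_tuples:
  assumes "x \<in> tuples D3 r" "set ys \<subseteq> {..<r}"
  shows "map (\<lambda>i. x ! i) ys \<in> tuples D3 (length ys)"
  using assms unfolding tuples_def by (auto intro!: subsetD[of "set x"] nth_mem)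

lemma sel_map:
  assumes "x \<in> tuples D3 r" "set ys \<subseteq> {..<r}"
  shows "map (\<lambda>i. map h x ! i) ys = map h (map (\<lambda>i. x ! i) ys)"
  using assms by (auto simp: tuples_def)

lemma winv_wadd:
  assumes "winv e s g1" "winv e t g2" "length ys = s" "length zs = t"
    "set ys \<subseteq> {..<r}" "set zs \<subseteq> {..<r}"
  shows "winv e r (snd (wadd D3 r g1 ys g2 zs))"
  unfolding winv_def
proof (intro ballI impI)
  fix x assume x: "x \<in> tuples D3 r" and nf: "snd (wadd D3 r g1 ys g2 zs) x \<noteq> PInf"
  define y where "y = map (\<lambda>i. x ! i) ys"
  define z where "z = map (\<lambda>i. x ! i) zs"
  have y: "y \<in> tuples D3 s" using sel_tuples[OF x assms(5)] assms(3) by (simp add: y_def)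
  have z: "z \<in> tuples D3 t" using sel_tuples[OF x assms(6)] assms(4) by (simp add: z_def)
  have fx: "map fa x \<in> tuples D3 r" "map fb x \<in> tuples D3 r"
    using x by (auto intro: map_fa_tuples map_fb_tuples)
  have val: "snd (wadd D3 r g1 ys g2 zs) x = qadd (g1 y) (g2 z)"
    using x by (simp add: wadd_def y_def z_def)
  have vala: "snd (wadd D3 r g1 ys g2 zs) (map fa x) = qadd (g1 (map fa y)) (g2 (map fa z))"
    using fx x assms by (simp add: wadd_def y_def z_def sel_map)
  have valb: "snd (wadd D3 r g1 ys g2 zs) (map fb x) = qadd (g1 (map fb y)) (g2 (map fb z))"
    using fx x assms by (simp add: wadd_def y_def z_def sel_map)
  have f1: "g1 y \<noteq> PInf" and f2: "g2 z \<noteq> PInf" using nf val qadd_fin by auto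
  have h1: "g1 (map fa y) \<noteq> PInf \<and> g1 (map fb y) \<noteq> PInf
      \<and> fval (g1 (map fb y)) \<le> fval (g1 y)
      \<and> e * fval (g1 (map fa y)) + (1 - e) * fval (g1 (map fb y)) \<le> fval (g1 y)"
    using assms(1) y f1 unfolding winv_def by blast
  have h2: "g2 (map fa z) \<noteq> PInf \<and> g2 (map fb z) \<noteq> PInf
      \<and> fval (g2 (map fb z)) \<le> fval (g2 z)
      \<and> e * fval (g2 (map fa z)) + (1 - e) * fval (g2 (map fb z)) \<le> fval (g2 z)"
    using assms(2) z f2 unfolding winv_def by blast
  show "snd (wadd D3 r g1 ys g2 zs) (map fa x) \<noteq> PInf \<and>
        snd (wadd D3 r g1 ys g2 zs) (map fb x) \<noteq> PInf \<and>
        fval (snd (wadd D3 r g1 ys g2 zs) (map fb x)) \<le> fval (snd (wadd D3 r g1 ys g2 zs) x) \<and>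
        e * fval (snd (wadd D3 r g1 ys g2 zs) (map fa x)) +
        (1 - e) * fval (snd (wadd D3 r g1 ys g2 zs) (map fb x))
        \<le> fval (snd (wadd D3 r g1 ys g2 zs) x)"
    unfolding val vala valb using h1 h2 f1 f2
    by (simp add: qadd_fin qadd_fval algebra_simps)
qed

lemma winv_wmin:
  assumes "winv e (r + s) g" "0 \<le> e" "e \<le> 1"
  shows "winv e r (snd (wmin D3 r s g))"
  unfolding winv_def
proof (intro ballI impI)
  fix x assume x: "x \<in> tuples D3 r" and nf: "snd (wmin D3 r s g) x \<noteq> PInf"
  define S where "S = (\<lambda>u. {g (u @ y) | y. y \<in> tuples D3 s})"
  have finS: "finite (S u)" for u
    using finite_tuples[of D3 s] unfolding S_def D3_def
    by (simp add: setcompr_eq_image)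
  have fx: "map fa x \<in> tuples D3 r" "map fb x \<in> tuples D3 r"
    using x by (auto intro: map_fa_tuples map_fb_tuples)
  have val: "snd (wmin D3 r s g) u = qMin (S u)" if "u \<in> tuples D3 r" for u
    using that by (simp add: wmin_def S_def)
  have "qMin (S x) \<in> S x" using qMin_in[OF finS] nf val[OF x] by simp
  then obtain y where y: "y \<in> tuples D3 s" and gy: "qMin (S x) = g (x @ y)"
    unfolding S_def by blast
  have xy: "x @ y \<in> tuples D3 (r + s)" using x y by (auto simp: tuples_def)
  have fin: "g (x @ y) \<noteq> PInf" using nf val[OF x] gy by simp
  have h: "g (map fa (x@y)) \<noteq> PInf \<and> g (map fb (x@y)) \<noteq> PInf
      \<and> fval (g (map fb (x@y))) \<le> fval (g (x@y))
      \<and> e * fval (g (map fa (x@y))) + (1 - e) * fval (g (map fb (x@y))) \<le> fval (g (x@y))"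
    using assms(1) xy fin unfolding winv_def by blast
  have ina: "g (map fa (x@y)) \<in> S (map fa x)"
    unfolding S_def using map_fa_tuples[OF y] by auto
  have inb: "g (map fb (x@y)) \<in> S (map fb x)"
    unfolding S_def using map_fb_tuples[OF y] by auto
  have la: "qMin (S (map fa x)) \<noteq> PInf \<and> fval (qMin (S (map fa x))) \<le> fval (g (map fa (x@y)))"
    using qMin_le[OF finS ina] h by blast
  have lb: "qMin (S (map fb x)) \<noteq> PInf \<and> fval (qMin (S (map fb x))) \<le> fval (g (map fb (x@y)))"
    using qMin_le[OF finS inb] h by blast
  have m1: "e * fval (qMin (S (map fa x))) \<le> e * fval (g (map fa (x@y)))"
    using la assms(2) by (simp add: mult_left_mono)
  have m2: "(1 - e) * fval (qMin (S (map fb x))) \<le> (1 - e) * fval (g (map fb (x@y)))"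
    using lb assms(3) by (simp add: mult_left_mono)
  show "snd (wmin D3 r s g) (map fa x) \<noteq> PInf \<and>
        snd (wmin D3 r s g) (map fb x) \<noteq> PInf \<and>
        fval (snd (wmin D3 r s g) (map fb x)) \<le> fval (snd (wmin D3 r s g) x) \<and>
        e * fval (snd (wmin D3 r s g) (map fa x)) + (1 - e) * fval (snd (wmin D3 r s g) (map fb x))
        \<le> fval (snd (wmin D3 r s g) x)"
    unfolding val[OF x] val[OF fx(1)] val[OF fx(2)] gy
    using la lb h m1 m2 by linarith
qed

lemma winv_scale:
  assumes "winv e m g" "0 \<le> c"
  shows "winv e m (\<lambda>x. qscale c (g x))"
  unfolding winv_def
proof (intro ballI impI)
  fix x assume x: "x \<in> tuples D3 m" and nf: "qscale c (g x) \<noteq> PInf"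
  have h: "g (map fa x) \<noteq> PInf \<and> g (map fb x) \<noteq> PInf
      \<and> fval (g (map fb x)) \<le> fval (g x)
      \<and> e * fval (g (map fa x)) + (1 - e) * fval (g (map fb x)) \<le> fval (g x)"
    using assms(1) x nf qscale_fin unfolding winv_def by blast
  have a: "c * fval (g (map fb x)) \<le> c * fval (g x)" using h assms(2) by (simp add: mult_left_mono)
  have b: "c * (e * fval (g (map fa x)) + (1 - e) * fval (g (map fb x))) \<le> c * fval (g x)"
    using h assms(2) by (simp add: mult_left_mono)
  show "qscale c (g (map fa x)) \<noteq> PInf \<and> qscale c (g (map fb x)) \<noteq> PInf \<and>
        fval (qscale c (g (map fb x))) \<le> fval (qscale c (g x)) \<and>
        e * fval (qscale c (g (map fa x))) + (1 - e) * fval (qscale c (g (map fb x)))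
        \<le> fval (qscale c (g x))"
    using h a b by (simp add: qscale_fin qscale_fval algebra_simps)
qed

lemma winv_const:
  assumes "winv e m g"
  shows "winv e m (\<lambda>x. qadd (g x) (Fin c))"
  unfolding winv_def
proof (intro ballI impI)
  fix x assume x: "x \<in> tuples D3 m" and nf: "qadd (g x) (Fin c) \<noteq> PInf"
  have h: "g (map fa x) \<noteq> PInf \<and> g (map fb x) \<noteq> PInf
      \<and> fval (g (map fb x)) \<le> fval (g x)
      \<and> e * fval (g (map fa x)) + (1 - e) * fval (g (map fb x)) \<le> fval (g x)"
    using assms(1) x nf qadd_fin unfolding winv_def by blast
  show "qadd (g (map fa x)) (Fin c) \<noteq> PInf \<and> qadd (g (map fb x)) (Fin c) \<noteq> PInf \<and>
        fval (qadd (g (map fb x)) (Fin c)) \<le> fval (qadd (g x) (Fin c)) \<and>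
        e * fval (qadd (g (map fa x)) (Fin c)) + (1 - e) * fval (qadd (g (map fb x)) (Fin c))
        \<le> fval (qadd (g x) (Fin c))"
    using h nf by (simp add: qadd_fin qadd_fval algebra_simps)
qed


lemma wadd_pair: "wadd D r g1 ys g2 zs = (r, snd (wadd D r g1 ys g2 zs))"
  by (simp add: wadd_def)
lemma wmin_pair: "wmin D r s g = (r, snd (wmin D r s g))"
  by (simp add: wmin_def)

lemma CC_common:
  assumes "(s, g1) \<in> CC" "(t, g2) \<in> CC"
  obtains e where "0 < e" "e \<le> 1" "winv e s g1" "winv e t g2"
proof -
  obtain e1 where e1: "0 < e1" "e1 \<le> 1" "winv e1 s g1" using assms(1) by (auto simp: CC_def)
  obtain e2 where e2: "0 < e2" "e2 \<le> 1" "winv e2 t g2" using assms(2) by (auto simp: CC_def)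
  show ?thesis
    apply (rule that[of "min e1 e2"])
    using e1 e2 winv_mono[of e1 s g1 "min e1 e2"] winv_mono[of e2 t g2 "min e1 e2"] by auto
qed

lemma CC_clone: "wrel_clone D3 CC"
  unfolding wrel_clone_def
proof (intro conjI allI impI)
  show "CC \<subseteq> wrels D3" by (auto simp: CC_def)
  show "phi_eq D3 \<in> CC"
  proof -
    have "winv 1 2 (snd (phi_eq D3))"
      unfolding winv_def
    proof (intro ballI impI)
      fix x assume x: "x \<in> tuples D3 2" and nf: "snd (phi_eq D3) x \<noteq> PInf"
      have eq: "x ! 0 = x ! 1" using nf x by (auto simp: phi_eq_def split: if_splits)
      have l: "length x = 2" using x by (simp add: tuples_def)
      have a: "map fa x \<in> tuples D3 2" "map fb x \<in> tuples D3 2"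
        using x by (auto intro: map_fa_tuples map_fb_tuples)
      have "map fa x ! 0 = map fa x ! 1" "map fb x ! 0 = map fb x ! 1" using l eq by auto
      then show "snd (phi_eq D3) (map fa x) \<noteq> PInf \<and> snd (phi_eq D3) (map fb x) \<noteq> PInf \<and>
        fval (snd (phi_eq D3) (map fb x)) \<le> fval (snd (phi_eq D3) x) \<and>
        1 * fval (snd (phi_eq D3) (map fa x)) + (1 - 1) * fval (snd (phi_eq D3) (map fb x))
        \<le> fval (snd (phi_eq D3) x)"
        using a x eq by (simp add: phi_eq_def)
    qed
    moreover have "phi_eq D3 \<in> wrels D3" by (auto simp: phi_eq_def wrels_def)
    ultimately show ?thesis by (auto simp: CC_def phi_eq_def intro: exI[of _ 1])
  qed
  show "phi_empty \<in> CC"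
    by (auto simp: CC_def phi_empty_def wrels_def winv_def intro!: exI[of _ 1])
next
  fix s t r :: nat and g1 g2 :: "nat list \<Rightarrow> qbar" and ys zs :: "nat list"
  assume h: "(s, g1) \<in> CC \<and> (t, g2) \<in> CC \<and> 1 \<le> r \<and> length ys = s \<and> length zs = t
      \<and> set ys \<subseteq> {..<r} \<and> set zs \<subseteq> {..<r}"
  then obtain e where e: "0 < e" "e \<le> 1" "winv e s g1" "winv e t g2"
    using CC_common by blast
  have "winv e r (snd (wadd D3 r g1 ys g2 zs))" using winv_wadd e h by blast
  moreover have "(r, snd (wadd D3 r g1 ys g2 zs)) \<in> wrels D3" using h by (auto simp: wadd_def wrels_def)
  ultimately have "(r, snd (wadd D3 r g1 ys g2 zs)) \<in> CC"
    unfolding CC_def using e by blast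
  then show "wadd D3 r g1 ys g2 zs \<in> CC" by (metis wadd_pair)
next
  fix r s :: nat and g :: "nat list \<Rightarrow> qbar" assume h: "(r + s, g) \<in> CC \<and> 1 \<le> r"
  then obtain e where e: "0 < e" "e \<le> 1" "winv e (r+s) g" by (auto simp: CC_def)
  have "winv e r (snd (wmin D3 r s g))" using winv_wmin e by simp
  moreover have "(r, snd (wmin D3 r s g)) \<in> wrels D3" using h by (auto simp: wmin_def wrels_def)
  ultimately have "(r, snd (wmin D3 r s g)) \<in> CC"
    unfolding CC_def using e by blast
  then show "wmin D3 r s g \<in> CC" by (metis wmin_pair)
next
  fix m :: nat and g :: "nat list \<Rightarrow> qbar" and c :: rat assume h: "(m, g) \<in> CC \<and> 0 \<le> c"
  then obtain e where e: "0 < e" "e \<le> 1" "winv e m g" by (auto simp: CC_def)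
  show "(m, \<lambda>x. qscale c (g x)) \<in> CC"
    using h e winv_scale[of e m g c] by (auto simp: CC_def wrels_def)
next
  fix m :: nat and g :: "nat list \<Rightarrow> qbar" and c :: rat assume h: "(m, g) \<in> CC"
  then obtain e where e: "0 < e" "e \<le> 1" "winv e m g" by (auto simp: CC_def)
  show "(m, \<lambda>x. qadd (g x) (Fin c)) \<in> CC"
    using h e winv_const[of e m g c] by (auto simp: CC_def wrels_def)
qed


definition vv :: "nat list \<Rightarrow> rat" where "vv z = (if z = [1] then 1 else 0)"
definition gam :: wrel where
  "gam = (1, \<lambda>z. if z \<in> tuples D3 1 then Fin (vv z) else PInf)"
definition GG :: "nat \<Rightarrow> wrel" where
  "GG n = (1, \<lambda>z. if z \<in> tuples D3 1
      then Fin (vv z + (if z = [2] then 1 / (of_nat n + 1) else 0)) else PInf)"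

lemma tuples1: "z \<in> tuples D3 1 \<longleftrightarrow> z = [0] \<or> z = [1] \<or> z = [2]"
  by (auto simp: tuples_def D3_def length_Suc_conv)

lemma tuples1': "z \<in> tuples D3 (Suc 0) \<longleftrightarrow> z = [0] \<or> z = [1] \<or> z = [2]"
  using tuples1 by simp

lemma GG_CC: "GG n \<in> CC"
proof -
  have "winv (1 / (of_nat n + 1)) 1 (snd (GG n))"
    unfolding winv_def
  proof (intro ballI impI)
    fix x assume x: "x \<in> tuples D3 1"
    then have "x = [0] \<or> x = [1] \<or> x = [2]" by (simp add: tuples1 tuples1')
    then show "snd (GG n) (map fa x) \<noteq> PInf \<and> snd (GG n) (map fb x) \<noteq> PInf \<and>
        fval (snd (GG n) (map fb x)) \<le> fval (snd (GG n) x) \<and>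
        1 / (of_nat n + 1) * fval (snd (GG n) (map fa x)) +
        (1 - 1 / (of_nat n + 1)) * fval (snd (GG n) (map fb x))
        \<le> fval (snd (GG n) x)"
      by (auto simp: GG_def tuples1 tuples1' fa_def fb_def vv_def)
  qed
  moreover have "0 < 1 / (of_nat n + 1 :: rat)" by simp
  moreover have "1 / (of_nat n + 1 :: rat) \<le> 1" by simp
  moreover have "(1, snd (GG n)) \<in> wrels D3" by (auto simp: GG_def wrels_def)
  ultimately have "(1, snd (GG n)) \<in> CC" unfolding CC_def by blast
  moreover have "GG n = (1, snd (GG n))" by (simp add: GG_def)
  ultimately show ?thesis by metis
qed

lemma GG_wrels: "GG n \<in> wrels D3" by (auto simp: GG_def wrels_def)

lemma gam_notin: "gam \<notin> CC"
proof
  assume "gam \<in> CC"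
  then obtain e where e: "0 < e" "winv e 1 (snd gam)" by (auto simp: CC_def gam_def)
  have "[2] \<in> tuples D3 1" by (simp add: tuples1 tuples1')
  then have "e * fval (snd gam (map fa [2])) + (1 - e) * fval (snd gam (map fb [2]))
        \<le> fval (snd gam [2])"
    using e(2) by (auto simp: winv_def gam_def)
  then show False using e(1) by (simp add: gam_def fa_def fb_def tuples1 tuples1' vv_def)
qed

lemma GG_inj: "inj GG"
proof
  fix m n assume "GG m = GG n"
  then have "snd (GG m) [2] = snd (GG n) [2]" by simp
  then have "1 / (of_nat m + 1 :: rat) = 1 / (of_nat n + 1)"
    by (simp add: GG_def tuples1 tuples1' vv_def)
  then show "m = n" by (simp add: field_simps)
qed

lemma arch_lemma:
  fixes S T :: rat
  assumes "\<And>n::nat. S + T / (of_nat n + 1) \<le> 0"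
  shows "S \<le> 0"
proof (rule ccontr)
  assume "\<not> S \<le> 0"
  then have S: "S > 0" by simp
  obtain n :: nat where n: "\<bar>T\<bar> / S < of_nat n" using reals_Archimedean2 by blast
  have "\<bar>T\<bar> < of_nat n * S" using n S by (simp add: field_simps)
  also have "\<dots> \<le> (of_nat n + 1) * S" using S by simp
  finally have "\<bar>T\<bar> / (of_nat n + 1) < S" by (simp add: field_simps)
  moreover have "- T / (of_nat n + 1) \<le> \<bar>T\<bar> / (of_nat n + 1)"
    by (intro divide_right_mono) auto
  ultimately have "0 < S + T / (of_nat n + 1)" by (simp add: field_simps)
  then show False using assms[of n] by simp
qed

lemma feas_gam: "feas D3 gam = tuples D3 1"
  by (auto simp: feas_def gam_def)
lemma feas_GG: "feas D3 (GG n) = tuples D3 1"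
  by (auto simp: feas_def GG_def)

lemma Pol_gam: "Pol D3 {gam} = Pol D3 {GG 0}"
  unfolding Pol_def using feas_gam feas_GG[of 0] by (simp add: gam_def GG_def)

lemma fval_GG: "fval (snd (GG n) z) = fval (snd gam z) + (if z = [2] then 1 / (of_nat n + 1) else 0)"
  by (auto simp: GG_def gam_def tuples1 tuples1')

lemma gam_Imp: "gam \<in> Imp D3 (wPol D3 (range GG))"
  unfolding Imp_def
proof (intro CollectI conjI ballI)
  show "gam \<in> wrels D3" by (auto simp: gam_def wrels_def)
  fix w assume w: "w \<in> wPol D3 (range GG)"
  then obtain C k \<omega> where wd: "w = (C, k, \<omega>)" and imp: "\<And>n. improves D3 (C, k, \<omega>) (GG n)"
    unfolding wPol_def by blast
  have sub: "C \<subseteq> Pol D3 {gam}" using imp[of 0] by (simp add: improves_def Pol_gam)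
  have "(\<Sum>f \<in> kary C k. \<omega> f * fval (snd gam (app f xs (fst gam)))) \<le> 0"
    if xs: "length xs = k" "set xs \<subseteq> feas D3 gam" for xs
  proof -
    define S where "S = (\<Sum>f \<in> kary C k. \<omega> f * fval (snd gam (app f xs 1)))"
    define T where "T = (\<Sum>f \<in> kary C k. \<omega> f * (if app f xs 1 = [2] then 1 else 0))"
    have "S + T / (of_nat n + 1) \<le> 0" for n
    proof -
      have "(\<Sum>f \<in> kary C k. \<omega> f * fval (snd (GG n) (app f xs (fst (GG n))))) \<le> 0"
        using imp[of n] xs feas_gam feas_GG[of n] by (simp add: improves_def)
      moreover have "(\<Sum>f \<in> kary C k. \<omega> f * fval (snd (GG n) (app f xs (fst (GG n)))))
          = (\<Sum>f \<in> kary C k. \<omega> f * fval (snd gam (app f xs 1))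
              + \<omega> f * (if app f xs 1 = [2] then 1 else 0) / (of_nat n + 1))"
        using fval_GG[of n] by (intro sum.cong refl) (simp add: GG_def algebra_simps)
      moreover have "\<dots> = S + T / (of_nat n + 1)"
        by (simp add: S_def T_def sum.distrib sum_divide_distrib)
      ultimately show ?thesis by simp
    qed
    then have "S \<le> 0" by (rule arch_lemma)
    then show ?thesis by (simp add: S_def gam_def)
  qed
  then show "improves D3 w gam" using sub by (simp add: wd improves_def)
qed

theorem lemma1:
  shows "\<exists>D :: nat set. finite D \<and> (\<exists>\<Gamma>. \<Gamma> \<subseteq> wrels D \<and> infinite \<Gamma>
           \<and> Imp D (wPol D \<Gamma>) \<noteq> wRelClone D \<Gamma>)"
proof (intro exI conjI)
  show "finite D3" by (simp add: D3_def)
  show sub: "range GG \<subseteq> wrels D3" using GG_wrels by auto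
  show "infinite (range GG)" using GG_inj finite_imageD[of GG UNIV] by auto
  have "wRelClone D3 (range GG) \<subseteq> CC"
    unfolding wRelClone_def using CC_clone GG_CC by (intro Inter_lower) auto
  then have "gam \<notin> wRelClone D3 (range GG)" using gam_notin by blast
  then show "Imp D3 (wPol D3 (range GG)) \<noteq> wRelClone D3 (range GG)" using gam_Imp by blast
qed

end
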